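(* Let $E=\{ax^4+by^4+cx^2y^2:a,b,c\in\mathbb{R}\}$ with the sup norm over $[-1,1]^2$. Then $$D_{\mathbb{R},4}(E):=\sup\left\{\frac{(|a|^{8/5}+|b|^{8/5}+|c|^{8/5})^{5/8}}{\|ax^4+by^4+cx^2y^2\|}:(a,b,c)\neq0\right\}=\left(2+3^{8/5}\right)^{5/8}\approx3.610,$$ attained at $\pm(x^4+y^4-3x^2y^2)$. In particular $D_{\mathbb{R},4}\ge D_{\mathbb{R},4}(\ell_\infty^2)\ge(2+3^{8/5})^{5/8}\approx3.610$.
   Context: $\ell_\infty^n$ is $\mathbb{R}^n$ with the sup norm; for a polynomial $P$ on $\ell_\infty^n$, $\|P\|=\sup_{x\in[-1,1]^n}|P(x)|$. For $P(x)=\sum_{|\alpha|=m}a_\alpha x^\alpha$, $D_{\mathbb{R},m}(\ell_\infty^n)=\sup\{(\sum_{|\alpha|=m}|a_\alpha|^{\frac{2m}{m+1}})^{\frac{m+1}{2m}}/\|P\|: P\ne 0 \text{ real $m$-homogeneous on }\ell_\infty^n\}$ and $D_{\mathbb{R},m}=\sup_nD_{\mathbb{R},m}(\ell_\infty^n)$ is the optimal constant in the real polynomial Bohnenblust–Hille inequality. *)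

theory Defs
  imports "HOL-Analysis.Analysis"
begin

definition polyE :: "real \<Rightarrow> real \<Rightarrow> real \<Rightarrow> real \<Rightarrow> real \<Rightarrow> real" where
  "polyE a b c x y = a * x ^ 4 + b * y ^ 4 + c * x ^ 2 * y ^ 2"

definition normE :: "real \<Rightarrow> real \<Rightarrow> real \<Rightarrow> real" where
  "normE a b c = Sup {\<bar>polyE a b c x y\<bar> | x y. \<bar>x\<bar> \<le> 1 \<and> \<bar>y\<bar> \<le> 1}"

definition ratioE :: "real \<Rightarrow> real \<Rightarrow> real \<Rightarrow> real" where
  "ratioE a b c =
     (\<bar>a\<bar> powr (8/5) + \<bar>b\<bar> powr (8/5) + \<bar>c\<bar> powr (8/5)) powr (5/8) / normE a b c"

definition D_E :: ereal where
  "D_E = (SUP v \<in> {v :: real \<times> real \<times> real. v \<noteq> (0, 0, 0)}.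
             ereal (ratioE (fst v) (fst (snd v)) (snd (snd v))))"

text \<open>Multi-indices alpha in N^n with |alpha| = m, encoded as functions nat => nat
  vanishing outside {..<n}.\<close>
definition multi_idx :: "nat \<Rightarrow> nat \<Rightarrow> (nat \<Rightarrow> nat) set" where
  "multi_idx n m = {\<alpha>. (\<forall>i\<ge>n. \<alpha> i = 0) \<and> sum \<alpha> {..<n} = m}"

definition hom_poly :: "nat \<Rightarrow> nat \<Rightarrow> ((nat \<Rightarrow> nat) \<Rightarrow> real) \<Rightarrow> (nat \<Rightarrow> real) \<Rightarrow> real" where
  "hom_poly n m a x = (\<Sum>\<alpha>\<in>multi_idx n m. a \<alpha> * (\<Prod>i<n. x i ^ \<alpha> i))"

definition hom_poly_norm :: "nat \<Rightarrow> nat \<Rightarrow> ((nat \<Rightarrow> nat) \<Rightarrow> real) \<Rightarrow> real" where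
  "hom_poly_norm n m a = Sup {\<bar>hom_poly n m a x\<bar> | x. \<forall>i<n. \<bar>x i\<bar> \<le> 1}"

definition BH_ratio :: "nat \<Rightarrow> nat \<Rightarrow> ((nat \<Rightarrow> nat) \<Rightarrow> real) \<Rightarrow> real" where
  "BH_ratio n m a =
     (\<Sum>\<alpha>\<in>multi_idx n m. \<bar>a \<alpha>\<bar> powr (2 * real m / (real m + 1)))
        powr ((real m + 1) / (2 * real m)) / hom_poly_norm n m a"

definition D_Rmn :: "nat \<Rightarrow> nat \<Rightarrow> ereal" where
  "D_Rmn m n = (SUP a \<in> {a. \<exists>\<alpha>\<in>multi_idx n m. a \<alpha> \<noteq> 0}. ereal (BH_ratio n m a))"

definition D_Rm :: "nat \<Rightarrow> ereal" where
  "D_Rm m = (SUP n. D_Rmn m n)"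

end

theory Submission
  imports Defs
begin

definition KK :: real where "KK = (2 + 3 powr (8/5)) powr (5/8)"

lemma tri3: "\<bar>p\<bar> \<le> A \<Longrightarrow> \<bar>q\<bar> \<le> B \<Longrightarrow> \<bar>r\<bar> \<le> C \<Longrightarrow> \<bar>p + q + r\<bar> \<le> A + B + (C::real)"
  by arith

lemma polyE_bound:
  assumes "\<bar>x\<bar> \<le> 1" "\<bar>y\<bar> \<le> 1"
  shows "\<bar>polyE a b c x y\<bar> \<le> \<bar>a\<bar> + \<bar>b\<bar> + \<bar>c\<bar>"
proof -
  have h4: "\<bar>x ^ 4\<bar> \<le> 1" "\<bar>y ^ 4\<bar> \<le> 1" "\<bar>x^2*y^2\<bar> \<le> 1"
  proof -
    have "\<bar>x\<bar>^4 \<le> 1" "\<bar>y\<bar>^4 \<le> 1" "\<bar>x\<bar>^2 \<le> 1" "\<bar>y\<bar>^2 \<le> 1"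
      using assms abs_ge_zero power_le_one by metis+
    then show "\<bar>x ^ 4\<bar> \<le> 1" "\<bar>y ^ 4\<bar> \<le> 1" "\<bar>x^2*y^2\<bar> \<le> 1"
      by (simp_all add: abs_mult power_abs mult_le_one)
  qed
  have 1: "\<bar>a * x^4\<bar> \<le> \<bar>a\<bar>" using h4(1) by (simp add: abs_mult mult_left_le)
  have 2: "\<bar>b * y^4\<bar> \<le> \<bar>b\<bar>" using h4(2) by (simp add: abs_mult mult_left_le)
  have 3: "\<bar>c * (x^2 * y^2)\<bar> \<le> \<bar>c\<bar>" using h4(3) by (simp only: abs_mult mult_left_le abs_ge_zero)
  have "\<bar>a * x^4 + b * y^4 + c * (x^2 * y^2)\<bar> \<le> \<bar>a\<bar> + \<bar>b\<bar> + \<bar>c\<bar>"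
    using tri3[OF 1 2 3] .
  then show ?thesis unfolding polyE_def by (simp add: mult.assoc)
qed

lemma bdd_E: "bdd_above {\<bar>polyE a b c x y\<bar> | x y. \<bar>x\<bar> \<le> 1 \<and> \<bar>y\<bar> \<le> 1}"
  by (rule bdd_aboveI[where M="\<bar>a\<bar> + \<bar>b\<bar> + \<bar>c\<bar>"]) (auto intro: polyE_bound)

lemma le_normE:
  assumes "\<bar>x\<bar> \<le> 1" "\<bar>y\<bar> \<le> 1"
  shows "\<bar>polyE a b c x y\<bar> \<le> normE a b c"
  unfolding normE_def by (rule cSup_upper[OF _ bdd_E]) (use assms in blast)

lemma ratio_le: "ratioE a b c \<le> KK"
proof -
  define N where "N = normE a b c"
  have a: "\<bar>a\<bar> \<le> N" using le_normE[of 1 0 a b c] by (simp add: N_def polyE_def)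
  have b: "\<bar>b\<bar> \<le> N" using le_normE[of 0 1 a b c] by (simp add: N_def polyE_def)
  have abc: "\<bar>a+b+c\<bar> \<le> N" using le_normE[of 1 1 a b c] by (simp add: N_def polyE_def)
  have c: "\<bar>c\<bar> \<le> 3*N" using a b abc by linarith
  have N0: "N \<ge> 0" using a by linarith
  have "\<bar>a\<bar> powr (8/5) + \<bar>b\<bar> powr (8/5) + \<bar>c\<bar> powr (8/5)
      \<le> N powr (8/5) + N powr (8/5) + (3*N) powr (8/5)"
    using a b c by (intro add_mono powr_mono2) auto
  also have "\<dots> = (2 + 3 powr (8/5)) * N powr (8/5)"
  proof -
    have e: "(3*N) powr (8/5) = 3 powr (8/5) * N powr (8/5)" using N0 by (simp add: powr_mult)
    show ?thesis unfolding e by (simp add: ring_distribs)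
  qed
  finally have S: "\<bar>a\<bar> powr (8/5) + \<bar>b\<bar> powr (8/5) + \<bar>c\<bar> powr (8/5)
      \<le> (2 + 3 powr (8/5)) * N powr (8/5)" .
  have "(\<bar>a\<bar> powr (8/5) + \<bar>b\<bar> powr (8/5) + \<bar>c\<bar> powr (8/5)) powr (5/8)
      \<le> ((2 + 3 powr (8/5)) * N powr (8/5)) powr (5/8)"
    using S by (intro powr_mono2) auto
  also have "\<dots> = KK * N"
  proof -
    have e1: "((2 + 3 powr (8/5)) * N powr (8/5)) powr (5/8) = KK * (N powr (8/5)) powr (5/8)"
      unfolding KK_def by (rule powr_mult; simp)
    have e2: "(N powr (8/5)) powr (5/8) = N" using N0 by (simp add: powr_powr)
    show ?thesis using e1 e2 by simp
  qed
  finally have T: "(\<bar>a\<bar> powr (8/5) + \<bar>b\<bar> powr (8/5) + \<bar>c\<bar> powr (8/5)) powr (5/8) \<le> KK * N" .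
  have K0: "KK \<ge> 0" by (simp add: KK_def)
  show ?thesis
  proof (cases "N = 0")
    case True then show ?thesis using K0 by (simp add: ratioE_def N_def)
  next
    case False
    then have "N > 0" using N0 by simp
    then show ?thesis using T unfolding ratioE_def N_def[symmetric]
      by (simp add: pos_divide_le_eq)
  qed
qed

lemma st_bound:
  fixes u v :: real
  assumes "0 \<le> u" "u \<le> 1" "0 \<le> v" "v \<le> 1"
  shows "abs (u^2 + v^2 - 3 * u * v) \<le> 1"
proof -
  have st: "u * v \<le> 1" using assms by (simp add: mult_le_one)
  have lo: "u^2 + v^2 - 3 * u * v \<ge> -1"
    using st sum_squares_bound[of u v] by linarith
  have hi: "u^2 + v^2 - 3 * u * v \<le> 1"
  proof (cases "u \<le> v")
    case True
    then have "u * u \<le> u * v" using assms by (simp add: mult_left_mono)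
    moreover have "v * v \<le> 1" using assms by (simp add: mult_le_one)
    moreover have "0 \<le> u * v" using assms by simp
    ultimately show ?thesis by (simp add: power2_eq_square)
  next
    case False
    then have "v * v \<le> u * v" using assms by (simp add: mult_right_mono)
    moreover have "u * u \<le> 1" using assms by (simp add: mult_le_one)
    moreover have "0 \<le> u * v" using assms by simp
    ultimately show ?thesis by (simp add: power2_eq_square)
  qed
  show ?thesis using lo hi by simp
qed

lemma poly_113: assumes "\<bar>x\<bar> \<le> 1" "\<bar>y\<bar> \<le> 1"
  shows "\<bar>polyE 1 1 (-3) x y\<bar> \<le> 1"
proof -
  have "x^2 \<le> 1" "y^2 \<le> 1" using assms by (auto simp: abs_le_square_iff[symmetric] abs_square_le_1)
  then have "abs ((x^2)^2 + (y^2)^2 - 3*(x^2)*(y^2)) \<le> 1" by (intro st_bound) auto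
  then show ?thesis unfolding polyE_def by (simp add: power_mult[symmetric] mult.assoc)
qed

lemma normE_113: "normE 1 1 (-3) = 1"
  unfolding normE_def
proof (rule cSup_eq_maximum)
  have "\<bar>polyE 1 1 (-3) 1 0\<bar> = 1" by (simp add: polyE_def)
  then show "1 \<in> {\<bar>polyE 1 1 (-3) x y\<bar> |x y. \<bar>x\<bar> \<le> 1 \<and> \<bar>y\<bar> \<le> 1}"
    by (metis (mono_tags, lifting) abs_one abs_zero mem_Collect_eq order_refl zero_le_one)
qed (auto intro: poly_113)

lemma normE_neg: "normE (-1) (-1) 3 = 1"
proof -
  have "normE (-1) (-1) 3 = normE 1 1 (-3)"
  proof -
    have "\<And>x y. \<bar>polyE (-1) (-1) 3 x y\<bar> = \<bar>polyE 1 1 (-3) x y\<bar>"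
    proof -
      fix x y
      have "polyE (-1) (-1) 3 x y = - polyE 1 1 (-3) x y" by (simp add: polyE_def)
      then show "\<bar>polyE (-1) (-1) 3 x y\<bar> = \<bar>polyE 1 1 (-3) x y\<bar>" by simp
    qed
    then show ?thesis unfolding normE_def by simp
  qed
  then show ?thesis using normE_113 by simp
qed

lemma ratio_113: "ratioE 1 1 (-3) = KK"
  by (simp add: ratioE_def normE_113 KK_def)

lemma ratio_neg: "ratioE (-1) (-1) 3 = KK"
  by (simp add: ratioE_def normE_neg KK_def)

definition gg :: "nat \<Rightarrow> nat \<Rightarrow> nat" where
  "gg k = (\<lambda>i. if i = 0 then k else if i = Suc 0 then 4 - k else 0)"

lemma gg_inj: "inj gg"
  by (rule injI) (metis gg_def)

lemma multi_idx_24: "multi_idx 2 4 = gg ` {0..4}"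
proof
  show "multi_idx 2 4 \<subseteq> gg ` {0..4}"
  proof
    fix \<alpha> assume "\<alpha> \<in> multi_idx 2 4"
    then have z: "\<forall>i\<ge>2. \<alpha> i = 0" and s: "\<alpha> 0 + \<alpha> 1 = 4"
      by (auto simp: multi_idx_def numeral_2_eq_2 lessThan_Suc)
    have "\<alpha> = gg (\<alpha> 0)"
    proof
      fix i show "\<alpha> i = gg (\<alpha> 0) i"
        using z s by (cases "i = 0"; cases "i = 1") (auto simp: gg_def)
    qed
    moreover have "\<alpha> 0 \<in> {0..4}" using s by auto
    ultimately show "\<alpha> \<in> gg ` {0..4}" by blast
  qed
next
  show "gg ` {0..4} \<subseteq> multi_idx 2 4"
    by (auto simp: multi_idx_def gg_def numeral_2_eq_2 lessThan_Suc)
qed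

definition aa :: "(nat \<Rightarrow> nat) \<Rightarrow> real" where
  "aa \<alpha> = (if \<alpha> 0 = 4 then 1 else if \<alpha> 0 = 0 then 1 else if \<alpha> 0 = 2 then -3 else 0)"

lemma set04: "{0..4::nat} = {0,1,2,3,4}" by auto

lemma hom_aa: "hom_poly 2 4 aa x = polyE 1 1 (-3) (x 0) (x 1)"
proof -
  have "hom_poly 2 4 aa x = (\<Sum>k\<in>{0..4}. aa (gg k) * (\<Prod>i<2. x i ^ gg k i))"
    unfolding hom_poly_def multi_idx_24 by (subst sum.reindex) (auto intro: inj_on_subset[OF gg_inj])
  also have "\<dots> = polyE 1 1 (-3) (x 0) (x 1)"
    unfolding set04 by (simp add: aa_def gg_def numeral_2_eq_2 polyE_def)
  finally show ?thesis .
qed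

lemma norm_aa: "hom_poly_norm 2 4 aa = 1"
proof -
  have "{\<bar>hom_poly 2 4 aa x\<bar> | x. \<forall>i<2. \<bar>x i\<bar> \<le> 1}
      = {\<bar>polyE 1 1 (-3) x y\<bar> | x y. \<bar>x\<bar> \<le> 1 \<and> \<bar>y\<bar> \<le> 1}"
  proof (intro equalityI subsetI)
    fix z assume "z \<in> {\<bar>hom_poly 2 4 aa x\<bar> | x. \<forall>i<2. \<bar>x i\<bar> \<le> 1}"
    then obtain x where xx: "z = \<bar>hom_poly 2 4 aa x\<bar>" "\<forall>i<2. \<bar>x i\<bar> \<le> 1" by blast
    then have h01: "\<bar>x 0\<bar> \<le> 1" "\<bar>x 1\<bar> \<le> 1" by auto
    show "z \<in> {\<bar>polyE 1 1 (-3) x y\<bar> | x y. \<bar>x\<bar> \<le> 1 \<and> \<bar>y\<bar> \<le> 1}"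
      unfolding xx(1) hom_aa using h01 by blast
  next
    fix z assume "z \<in> {\<bar>polyE 1 1 (-3) x y\<bar> | x y. \<bar>x\<bar> \<le> 1 \<and> \<bar>y\<bar> \<le> 1}"
    then obtain x y where xy: "z = \<bar>polyE 1 1 (-3) x y\<bar>" "\<bar>x\<bar> \<le> 1" "\<bar>y\<bar> \<le> 1" by blast
    define w where "w = (\<lambda>i::nat. if i = 0 then x else y)"
    have "z = \<bar>hom_poly 2 4 aa w\<bar>" by (simp add: hom_aa w_def xy)
    moreover have "\<forall>i<2. \<bar>w i\<bar> \<le> 1" using xy by (simp add: w_def)
    ultimately show "z \<in> {\<bar>hom_poly 2 4 aa x\<bar> | x. \<forall>i<2. \<bar>x i\<bar> \<le> 1}" by blast
  qed
  then show ?thesis unfolding hom_poly_norm_def using normE_113 normE_def by simp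
qed

lemma BH_aa: "BH_ratio 2 4 aa = KK"
proof -
  have "(\<Sum>\<alpha>\<in>multi_idx 2 4. \<bar>aa \<alpha>\<bar> powr (8/5)) = (\<Sum>k\<in>{0..4}. \<bar>aa (gg k)\<bar> powr (8/5))"
    unfolding multi_idx_24 by (subst sum.reindex) (auto intro: inj_on_subset[OF gg_inj])
  also have "\<dots> = 2 + 3 powr (8/5)"
    unfolding set04 by (simp add: aa_def gg_def)
  finally have S: "(\<Sum>\<alpha>\<in>multi_idx 2 4. \<bar>aa \<alpha>\<bar> powr (8/5)) = 2 + 3 powr (8/5)" .
  have e1: "2 * real (4::nat) / (real (4::nat) + 1) = 8/5" by simp
  have e2: "(real (4::nat) + 1) / (2 * real (4::nat)) = 5/8" by simp
  show ?thesis unfolding BH_ratio_def e1 e2 S norm_aa KK_def by simp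
qed

theorem mainTheorem9:
  shows "D_E = ereal ((2 + 3 powr (8/5)) powr (5/8))
    \<and> ratioE 1 1 (-3) = (2 + 3 powr (8/5)) powr (5/8)
    \<and> ratioE (-1) (-1) 3 = (2 + 3 powr (8/5)) powr (5/8)
    \<and> D_Rmn 4 2 \<le> D_Rm 4
    \<and> ereal ((2 + 3 powr (8/5)) powr (5/8)) \<le> D_Rmn 4 2"
proof (intro conjI)
  show "D_E = ereal ((2 + 3 powr (8/5)) powr (5/8))"
    unfolding KK_def[symmetric] D_E_def
  proof (rule antisym)
    show "(SUP v\<in>{v :: real \<times> real \<times> real. v \<noteq> (0, 0, 0)}.
             ereal (ratioE (fst v) (fst (snd v)) (snd (snd v)))) \<le> ereal KK"
      by (rule SUP_least) (simp add: ratio_le)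
    show "ereal KK \<le> (SUP v\<in>{v :: real \<times> real \<times> real. v \<noteq> (0, 0, 0)}.
             ereal (ratioE (fst v) (fst (snd v)) (snd (snd v))))"
      by (rule SUP_upper2[where i="(1, 1, -3)"]) (auto simp: ratio_113)
  qed
  show "ratioE 1 1 (-3) = (2 + 3 powr (8/5)) powr (5/8)" using ratio_113 by (simp add: KK_def)
  show "ratioE (-1) (-1) 3 = (2 + 3 powr (8/5)) powr (5/8)" using ratio_neg by (simp add: KK_def)
  show "D_Rmn 4 2 \<le> D_Rm 4" unfolding D_Rm_def by (rule SUP_upper) simp
  show "ereal ((2 + 3 powr (8/5)) powr (5/8)) \<le> D_Rmn 4 2"
    unfolding D_Rmn_def KK_def[symmetric]
  proof (rule SUP_upper2[where i=aa])
    have "gg 4 \<in> multi_idx 2 4" unfolding multi_idx_24 by auto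
    moreover have "aa (gg 4) \<noteq> 0" by (simp add: aa_def gg_def)
    ultimately show "aa \<in> {a. \<exists>\<alpha>\<in>multi_idx 2 4. a \<alpha> \<noteq> 0}" by blast
    show "ereal KK \<le> ereal (BH_ratio 2 4 aa)" by (simp add: BH_aa)
  qed
qed

end
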